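(* Let $N\ge1$ and let $\mathsf{G}=\begin{bmatrix}-\frac13&\frac23&\frac23\\\frac23&-\frac13&\frac23\\\frac23&\frac23&-\frac13\end{bmatrix}$ be the Grover coin. Then the walk operator $U=S(\mathsf{G}\otimes I_2\otimes I_N)$ described in the context is aperiodic, i.e. there is no $\tau\in\mathbb{N}$ with $U^\tau=I_{6N}$.
   Context: Canonical bases $\{\ket{l}_3\},\{\ket{s}_2\},\{\ket{r}_N\}$ of $\mathbb{C}^3,\mathbb{C}^2,\mathbb{C}^N$ ($r$ mod $N$). This is the three-state walk on the Cayley graph of the dihedral group $D_N$ with generators $\{a,b\}$, with shift operator $S=\sum_{r=0}^{N-1}\big[\ket{0}_3\bra{0}_3\otimes\ket{0}_2\bra{0}_2\otimes\ket{r}_N\bra{r-1}_N+\ket{0}_3\bra{0}_3\otimes\ket{1}_2\bra{1}_2\otimes\ket{r}_N\bra{r+1}_N+\ket{1}_3\bra{1}_3\otimes I_2\otimes\ket{r}_N\bra{r}_N+\ket{2}_3\bra{2}_3\otimes(\ket{0}_2\bra{1}_2+\ket{1}_2\bra{0}_2)\otimes\ket{r}_N\bra{r}_N\big]$. *)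

theory Defs
  imports Complex_Main "Jordan_Normal_Form.Matrix"
begin

(* Kronecker (tensor) product of matrices, standard ordering:
   index of |i>|j> is i * dim B + j *)
definition kron :: "complex mat \<Rightarrow> complex mat \<Rightarrow> complex mat" where
  "kron A B = mat (dim_row A * dim_row B) (dim_col A * dim_col B)
     (\<lambda>(i,j). A $$ (i div dim_row B, j div dim_col B) * B $$ (i mod dim_row B, j mod dim_col B))"

definition ketbra :: "nat \<Rightarrow> nat \<Rightarrow> nat \<Rightarrow> complex mat" where
  "ketbra n a b = mat n n (\<lambda>(i,j). if i = a \<and> j = b then 1 else 0)"

definition msum :: "nat \<Rightarrow> ('i \<Rightarrow> complex mat) \<Rightarrow> 'i set \<Rightarrow> complex mat" where
  "msum n f I = mat n n (\<lambda>ij. \<Sum>x\<in>I. f x $$ ij)"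

definition predN :: "nat \<Rightarrow> nat \<Rightarrow> nat" where
  "predN N r = nat ((int r - 1) mod int N)"
definition succN :: "nat \<Rightarrow> nat \<Rightarrow> nat" where
  "succN N r = nat ((int r + 1) mod int N)"

(* shift operator S of the three-state walk on the Cayley graph of D_N *)
definition shiftS :: "nat \<Rightarrow> complex mat" where
  "shiftS N = msum (6 * N) (\<lambda>r.
       kron (ketbra 3 0 0) (kron (ketbra 2 0 0) (ketbra N r (predN N r)))
     + kron (ketbra 3 0 0) (kron (ketbra 2 1 1) (ketbra N r (succN N r)))
     + kron (ketbra 3 1 1) (kron (1\<^sub>m 2) (ketbra N r r))
     + kron (ketbra 3 2 2) (kron (ketbra 2 0 1 + ketbra 2 1 0) (ketbra N r r)))
     {0..<N}"

definition grover3 :: "complex mat" where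
  "grover3 = mat 3 3 (\<lambda>(i,j). if i = j then - 1/3 else 2/3)"

definition walkU :: "nat \<Rightarrow> complex mat" where
  "walkU N = shiftS N * kron grover3 (kron (1\<^sub>m 2) (1\<^sub>m N))"

end

theory Submission imports Defs begin

lemma sum_split_mult:
  "((\<Sum>j<a*b. f j) :: 'b::comm_monoid_add) = (\<Sum>p<a. \<Sum>q<b. f (p*b+q :: nat))"
proof (induction a)
  case 0 then show ?case by simp
next
  case (Suc a)
  have "{..<Suc a * b} = {..<a*b} \<union> {a*b..<a*b+b}" by auto
  then have "(\<Sum>j<Suc a*b. f j) = (\<Sum>j<a*b. f j) + (\<Sum>j\<in>{a*b..<a*b+b}. f j)"
    by (simp add: sum.union_disjoint ivl_disj_int)
  also have "(\<Sum>j\<in>{a*b..<a*b+b}. f j) = (\<Sum>q<b. f (a*b+q))"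
  proof -
    have "(\<Sum>j\<in>{a*b..<a*b+b}. f j) = (\<Sum>q\<in>{0..<b}. f (q+a*b))"
      using sum.shift_bounds_nat_ivl[of f 0 "a*b" b] by (simp add: add.commute)
    then show ?thesis by (simp add: atLeast0LessThan add.commute)
  qed
  finally show ?case using Suc by simp
qed

definition idx :: "nat \<Rightarrow> nat \<Rightarrow> nat \<Rightarrow> nat \<Rightarrow> nat" where
  "idx N l s r = l * (2*N) + (s*N + r)"

lemma sN_lt: "(s::nat) < 2 \<Longrightarrow> r < N \<Longrightarrow> s*N + r < 2*N"
  by (cases s) auto

lemma idx_lt: "l < 3 \<Longrightarrow> s < 2 \<Longrightarrow> r < N \<Longrightarrow> idx N l s r < 6 * N"
proof -
  assume a: "l < 3" "s < 2" "r < N"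
  have "s*N + r < 2*N" using a sN_lt by blast
  moreover have "l*(2*N) \<le> 2*(2*N)" using a by simp
  ultimately show ?thesis unfolding idx_def by linarith
qed

lemma idx_div: "s < 2 \<Longrightarrow> r < N \<Longrightarrow> idx N l s r div (2*N) = l"
  unfolding idx_def using sN_lt[of s r N] by simp
lemma idx_mod: "s < 2 \<Longrightarrow> r < N \<Longrightarrow> idx N l s r mod (2*N) = s*N+r"
  unfolding idx_def using sN_lt[of s r N] by simp
lemma sN_div: "(s::nat) < 2 \<Longrightarrow> r < N \<Longrightarrow> (s*N + r) div N = s"  by simp
lemma sN_mod: "(s::nat) < 2 \<Longrightarrow> r < N \<Longrightarrow> (s*N + r) mod N = r"  by simp

lemma sum6: "(\<Sum>j<6*N. f j) = (\<Sum>l<3. \<Sum>s<2. \<Sum>r<N. f (idx N l s r))"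
proof -
  have "(\<Sum>j<6*N. f j) = (\<Sum>l<3. \<Sum>q<2*N. f (l*(2*N)+q))" using sum_split_mult[of f 3 "2*N"] by simp
  also have "\<dots> = (\<Sum>l<3. \<Sum>s<2. \<Sum>r<N. f (l*(2*N)+(s*N+r)))"
    by (rule sum.cong[OF refl], rule sum_split_mult)
  finally show ?thesis unfolding idx_def .
qed

lemma kron_idx: "i < dim_row A * dim_row B \<Longrightarrow> j < dim_col A * dim_col B \<Longrightarrow>
  kron A B $$ (i,j) = A $$ (i div dim_row B, j div dim_col B) * B $$ (i mod dim_row B, j mod dim_col B)"
  unfolding kron_def by simp

lemma kron3: assumes "A \<in> carrier_mat 3 3" "B \<in> carrier_mat 2 2" "C \<in> carrier_mat N N"
  "l < 3" "s < 2" "r < N" "l' < 3" "s' < 2" "r' < N"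
  shows "kron A (kron B C) $$ (idx N l s r, idx N l' s' r') = A $$ (l,l') * B $$ (s,s') * C $$ (r,r')"
proof -
  have d: "dim_row (kron B C) = 2*N" "dim_col (kron B C) = 2*N" "dim_row B = 2" "dim_col B = 2"
    "dim_row C = N" "dim_col C = N" "dim_row A = 3" "dim_col A = 3"
    using assms(1,2,3) by (auto simp: kron_def)
  have i1: "idx N l s r < dim_row A * dim_row (kron B C)" "idx N l' s' r' < dim_col A * dim_col (kron B C)"
    using idx_lt assms d by auto
  have i2: "s*N+r < dim_row B * dim_row C" "s'*N+r' < dim_col B * dim_col C"
    using sN_lt assms d by auto
  show ?thesis
    unfolding kron_idx[OF i1] d idx_div[OF assms(5,6)] idx_div[OF assms(8,9)]
      idx_mod[OF assms(5,6)] idx_mod[OF assms(8,9)]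
    unfolding kron_idx[OF i2] d sN_div[OF assms(5,6)] sN_div[OF assms(8,9)]
      sN_mod[OF assms(5,6)] sN_mod[OF assms(8,9)]
    by (simp add: mult.assoc)
qed

definition vY :: "nat \<Rightarrow> (nat \<Rightarrow> nat \<Rightarrow> complex) \<Rightarrow> complex vec" where
  "vY N Y = vec (6*N) (\<lambda>i. Y (i div (2*N)) ((i mod (2*N)) div N))"

lemma vY_idx: "l < 3 \<Longrightarrow> s < 2 \<Longrightarrow> r < N \<Longrightarrow> vY N Y $ idx N l s r = Y l s"
  unfolding vY_def using idx_lt[of l s r N] by (simp add: idx_div idx_mod)

lemma idx_surj: assumes "i < 6*N"
  shows "i = idx N (i div (2*N)) ((i mod (2*N)) div N) (i mod N) \<and> i div (2*N) < 3
     \<and> (i mod (2*N)) div N < 2 \<and> i mod N < N"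
proof -
  have N: "N > 0" using assms by simp
  have a: "i div (2*N) < 3" using assms by (simp add: less_mult_imp_div_less)
  have b: "(i mod (2*N)) div N < 2" using N by (simp add: less_mult_imp_div_less)
  have c: "(i mod (2*N)) mod N = i mod N" by (rule mod_mod_cancel) simp
  have "i = i div (2*N) * (2*N) + ((i mod (2*N)) div N * N + (i mod (2*N)) mod N)" by (metis div_mult_mod_eq)
  then show ?thesis using a b c N unfolding idx_def by simp
qed

lemma mv_vY: assumes A: "A \<in> carrier_mat (6*N) (6*N)"
  and K: "\<And>l s r l' s'. l < 3 \<Longrightarrow> s < 2 \<Longrightarrow> r < N \<Longrightarrow> l' < 3 \<Longrightarrow> s' < 2 \<Longrightarrow>
     (\<Sum>r'<N. A $$ (idx N l s r, idx N l' s' r')) = K l l' s s'"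
  shows "A *\<^sub>v vY N Y = vY N (\<lambda>l s. \<Sum>l'<3. \<Sum>s'<2. Y l' s' * K l l' s s')"
proof (rule eq_vecI)
  show "dim_vec (A *\<^sub>v vY N Y) = dim_vec (vY N (\<lambda>l s. \<Sum>l'<3. \<Sum>s'<2. Y l' s' * K l l' s s'))"
    using A by (simp add: vY_def)
next
  fix i assume "i < dim_vec (vY N (\<lambda>l s. \<Sum>l'<3. \<Sum>s'<2. Y l' s' * K l l' s s'))"
  then have i: "i < 6*N" by (simp add: vY_def)
  define l where "l = i div (2*N)"
  define s where "s = (i mod (2*N)) div N"
  define r where "r = i mod N"
  have ie: "i = idx N l s r" and b: "l < 3" "s < 2" "r < N"
    using idx_surj[OF i] unfolding l_def s_def r_def by auto
  have "(A *\<^sub>v vY N Y) $ i = (\<Sum>j<6*N. A $$ (i,j) * vY N Y $ j)"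
    using A i by (simp add: scalar_prod_def atLeast0LessThan vY_def row_def)
  also have "\<dots> = (\<Sum>l'<3. \<Sum>s'<2. \<Sum>r'<N. A $$ (i,idx N l' s' r') * Y l' s')"
    unfolding sum6 by (intro sum.cong refl, simp add: vY_idx)
  also have "\<dots> = (\<Sum>l'<3. \<Sum>s'<2. Y l' s' * K l l' s s')"
    unfolding ie
    by (intro sum.cong refl, simp add: K[OF b, symmetric] sum_distrib_left mult.commute)
  also have "\<dots> = vY N (\<lambda>l s. \<Sum>l'<3. \<Sum>s'<2. Y l' s' * K l l' s s') $ i"
    unfolding ie using b by (simp add: vY_idx)
  finally show "(A *\<^sub>v vY N Y) $ i = vY N (\<lambda>l s. \<Sum>l'<3. \<Sum>s'<2. Y l' s' * K l l' s s') $ i" .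
qed

lemma ketbra_carrier[simp]: "ketbra n a b \<in> carrier_mat n n"
  unfolding ketbra_def by simp
lemma ketbra_idx: "i < n \<Longrightarrow> j < n \<Longrightarrow> ketbra n a b $$ (i,j) = (if i = a \<and> j = b then 1 else 0)"
  unfolding ketbra_def by simp
lemma grover3_carrier[simp]: "grover3 \<in> carrier_mat 3 3"
  unfolding grover3_def by simp
lemma kron_carrier[simp]: "A \<in> carrier_mat a b \<Longrightarrow> B \<in> carrier_mat c d \<Longrightarrow> kron A B \<in> carrier_mat (a*c) (b*d)"
  unfolding kron_def by auto

lemma sum_ketbra: assumes "q < N" "r0 < N"
  shows "(\<Sum>r'<N. ketbra N r q $$ (r0, r')) = (if r0 = r then 1 else 0)"
proof -
  have "(\<Sum>r'<N. ketbra N r q $$ (r0, r')) = (\<Sum>r'<N. if r' = q then (if r0 = r then 1 else 0) else 0)"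
    using assms by (intro sum.cong refl) (auto simp: ketbra_idx)
  also have "\<dots> = (if r0 = r then 1 else 0)" using assms by (simp add: sum.delta)
  finally show ?thesis .
qed

lemma sum_one: assumes "r0 < N"
  shows "(\<Sum>r'<N. (1\<^sub>m N :: complex mat) $$ (r0, r')) = 1"
proof -
  have "(\<Sum>r'<N. (1\<^sub>m N :: complex mat) $$ (r0, r')) = (\<Sum>r'<N. if r' = r0 then 1 else 0)"
    using assms by (intro sum.cong refl) auto
  also have "\<dots> = 1" using assms by (simp add: sum.delta)
  finally show ?thesis .
qed

lemma KG: assumes "l < 3" "s < 2" "r < N" "l' < 3" "s' < 2"
  shows "(\<Sum>r'<N. kron grover3 (kron (1\<^sub>m 2) (1\<^sub>m N)) $$ (idx N l s r, idx N l' s' r'))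
     = grover3 $$ (l,l') * (if s = s' then 1 else 0)"
proof -
  have "(\<Sum>r'<N. kron grover3 (kron (1\<^sub>m 2) (1\<^sub>m N)) $$ (idx N l s r, idx N l' s' r'))
    = (\<Sum>r'<N. grover3 $$ (l,l') * (1\<^sub>m 2) $$ (s,s') * (1\<^sub>m N) $$ (r,r'))"
    using assms by (intro sum.cong refl) (simp add: kron3)
  also have "\<dots> = grover3 $$ (l,l') * (1\<^sub>m 2) $$ (s,s') * (\<Sum>r'<N. (1\<^sub>m N) $$ (r,r'))"
    by (simp add: sum_distrib_left)
  also have "\<dots> = grover3 $$ (l,l') * (if s = s' then 1 else 0)"
    using assms by (simp add: sum_one)
  finally show ?thesis .
qed

lemma predN_lt: "N > 0 \<Longrightarrow> predN N r < N"
  unfolding predN_def by (simp add: nat_less_iff)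
lemma succN_lt: "N > 0 \<Longrightarrow> succN N r < N"
  unfolding succN_def by (simp add: nat_less_iff)

definition XX :: "complex mat" where "XX = ketbra 2 0 1 + ketbra 2 1 0"
lemma XX_carrier[simp]: "XX \<in> carrier_mat 2 2" unfolding XX_def by auto

definition TT :: "nat \<Rightarrow> nat \<Rightarrow> complex mat" where
  "TT N r = kron (ketbra 3 0 0) (kron (ketbra 2 0 0) (ketbra N r (predN N r)))
     + kron (ketbra 3 0 0) (kron (ketbra 2 1 1) (ketbra N r (succN N r)))
     + kron (ketbra 3 1 1) (kron (1\<^sub>m 2) (ketbra N r r))
     + kron (ketbra 3 2 2) (kron XX (ketbra N r r))"

definition KS :: "nat \<Rightarrow> nat \<Rightarrow> nat \<Rightarrow> nat \<Rightarrow> complex" where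
  "KS l l' s s' = ketbra 3 0 0 $$ (l,l') * ketbra 2 0 0 $$ (s,s')
     + ketbra 3 0 0 $$ (l,l') * ketbra 2 1 1 $$ (s,s')
     + ketbra 3 1 1 $$ (l,l') * (1\<^sub>m 2) $$ (s,s')
     + ketbra 3 2 2 $$ (l,l') * XX $$ (s,s')"

lemma shiftS_carrier: "shiftS N \<in> carrier_mat (6*N) (6*N)"
  unfolding shiftS_def msum_def by simp

lemma TT_idx: assumes N: "N > 0" and b: "l < 3" "s < 2" "r0 < N" "l' < 3" "s' < 2" "r' < N" "r < N"
  shows "TT N r $$ (idx N l s r0, idx N l' s' r') =
      ketbra 3 0 0 $$ (l,l') * ketbra 2 0 0 $$ (s,s') * ketbra N r (predN N r) $$ (r0,r')
     + ketbra 3 0 0 $$ (l,l') * ketbra 2 1 1 $$ (s,s') * ketbra N r (succN N r) $$ (r0,r')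
     + ketbra 3 1 1 $$ (l,l') * (1\<^sub>m 2) $$ (s,s') * ketbra N r r $$ (r0,r')
     + ketbra 3 2 2 $$ (l,l') * XX $$ (s,s') * ketbra N r r $$ (r0,r')"
proof -
  have i: "idx N l s r0 < 6*N" "idx N l' s' r' < 6*N" using idx_lt b by auto
  have dr: "\<And>A B C. dim_row (kron A (kron B C)) = dim_row A * (dim_row B * dim_row C)"
     "\<And>A B C. dim_col (kron A (kron B C)) = dim_col A * (dim_col B * dim_col C)"
    by (auto simp: kron_def)
  show ?thesis unfolding TT_def using i b
    by (simp add: dr ketbra_def XX_def kron3[OF _ _ _ b(1-3) b(4-6)] del: One_nat_def)
qed

lemma KS_lem: assumes N: "N > 0" and b: "l < 3" "s < 2" "r0 < N" "l' < 3" "s' < 2"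
  shows "(\<Sum>r'<N. shiftS N $$ (idx N l s r0, idx N l' s' r')) = KS l l' s s'"
proof -
  have "(\<Sum>r'<N. shiftS N $$ (idx N l s r0, idx N l' s' r'))
     = (\<Sum>r'<N. \<Sum>r<N. TT N r $$ (idx N l s r0, idx N l' s' r'))"
  proof (intro sum.cong refl)
    fix r' assume "r' \<in> {..<N}"
    then have "idx N l s r0 < 6*N" "idx N l' s' r' < 6*N" using idx_lt b by auto
    then show "shiftS N $$ (idx N l s r0, idx N l' s' r') = (\<Sum>r<N. TT N r $$ (idx N l s r0, idx N l' s' r'))"
      unfolding shiftS_def msum_def TT_def XX_def by (simp add: atLeast0LessThan)
  qed
  also have "\<dots> = (\<Sum>r<N. \<Sum>r'<N. TT N r $$ (idx N l s r0, idx N l' s' r'))"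
    by (rule sum.swap)
  also have "\<dots> = (\<Sum>r<N. (if r0 = r then KS l l' s s' else 0))"
  proof (intro sum.cong refl)
    fix r assume r: "r \<in> {..<N}"
    have "(\<Sum>r'<N. TT N r $$ (idx N l s r0, idx N l' s' r')) =
      (\<Sum>r'<N. ketbra 3 0 0 $$ (l,l') * ketbra 2 0 0 $$ (s,s') * ketbra N r (predN N r) $$ (r0,r')
     + ketbra 3 0 0 $$ (l,l') * ketbra 2 1 1 $$ (s,s') * ketbra N r (succN N r) $$ (r0,r')
     + ketbra 3 1 1 $$ (l,l') * (1\<^sub>m 2) $$ (s,s') * ketbra N r r $$ (r0,r')
     + ketbra 3 2 2 $$ (l,l') * XX $$ (s,s') * ketbra N r r $$ (r0,r'))"
      using r by (intro sum.cong refl) (simp add: TT_idx[OF N b])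
    also have "\<dots> = (if r0 = r then KS l l' s s' else 0)"
      using r b N predN_lt[OF N, of r] succN_lt[OF N, of r]
      by (simp add: sum.distrib sum_distrib_left[symmetric] sum_ketbra KS_def del: One_nat_def)
    finally show "(\<Sum>r'<N. TT N r $$ (idx N l s r0, idx N l' s' r')) = (if r0 = r then KS l l' s s' else 0)" .
  qed
  also have "\<dots> = KS l l' s s'" using b by (simp add: sum.delta)
  finally show ?thesis .
qed

lemma vY_cong: assumes "\<And>l s. l < 3 \<Longrightarrow> s < 2 \<Longrightarrow> Y l s = Y' l s"
  shows "vY N Y = vY N Y'"
proof (rule eq_vecI)
  fix i assume "i < dim_vec (vY N Y')"
  then have i: "i < 6*N" by (simp add: vY_def)
  from idx_surj[OF i] show "vY N Y $ i = vY N Y' $ i" using assms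
    by (metis vY_idx)
qed (simp add: vY_def)

lemma vY_carrier[simp]: "vY N Y \<in> carrier_vec (6*N)"
  unfolding vY_def by simp

fun cf :: "complex \<times> complex \<times> complex \<Rightarrow> nat \<Rightarrow> complex" where
  "cf (a,b,c) l = (if l = 0 then a else if l = 1 then b else c)"

definition sg :: "nat \<Rightarrow> complex" where "sg s = (if s = 0 then 1 else -1)"

fun Ft :: "complex \<times> complex \<times> complex \<Rightarrow> complex \<times> complex \<times> complex" where
  "Ft (a,b,c) = ((-a+2*b+2*c)/3, (2*a-b+2*c)/3, (-2*a-2*b+c)/3)"

lemma sum3: "(\<Sum>l<(3::nat). f l) = f 0 + f 1 + (f 2 :: complex)"
  by (simp add: eval_nat_numeral)
lemma sum2: "(\<Sum>l<(2::nat). f l) = f 0 + (f 1 :: complex)"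
  by (simp add: eval_nat_numeral)

lemma step: assumes N: "N > 0"
  shows "walkU N *\<^sub>v vY N (\<lambda>l s. cf t l * sg s) = vY N (\<lambda>l s. cf (Ft t) l * sg s)"
proof -
  obtain a b c where t: "t = (a,b,c)" by (cases t) auto
  have Bc: "kron grover3 (kron (1\<^sub>m 2) (1\<^sub>m N)) \<in> carrier_mat (6*N) (6*N)"
    using kron_carrier[OF grover3_carrier kron_carrier[OF one_carrier_mat one_carrier_mat], of 2 N]
    by (simp add: mult.assoc)
  have "walkU N *\<^sub>v vY N (\<lambda>l s. cf t l * sg s) =
     shiftS N *\<^sub>v (kron grover3 (kron (1\<^sub>m 2) (1\<^sub>m N)) *\<^sub>v vY N (\<lambda>l s. cf t l * sg s))"
    unfolding walkU_def by (rule assoc_mult_mat_vec[OF shiftS_carrier Bc vY_carrier])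
  also have "kron grover3 (kron (1\<^sub>m 2) (1\<^sub>m N)) *\<^sub>v vY N (\<lambda>l s. cf t l * sg s)
    = vY N (\<lambda>l s. \<Sum>l'<3. \<Sum>s'<2. cf t l' * sg s' * (grover3 $$ (l,l') * (if s = s' then 1 else 0)))"
    by (rule mv_vY[OF Bc], rule KG)
  also have "shiftS N *\<^sub>v \<dots> = vY N (\<lambda>l s. \<Sum>l'<3. \<Sum>s'<2. 
       (\<Sum>l''<3. \<Sum>s''<2. cf t l'' * sg s'' * (grover3 $$ (l',l'') * (if s' = s'' then 1 else 0))) * KS l l' s s')"
    by (rule mv_vY[OF shiftS_carrier], rule KS_lem[OF N])
  also have "\<dots> = vY N (\<lambda>l s. cf (Ft t) l * sg s)"
  proof (rule vY_cong)
    fix l s :: nat assume "l < 3" "s < 2"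
    then have "l = 0 \<or> l = 1 \<or> l = 2" "s = 0 \<or> s = 1" by auto
    then show "(\<Sum>l'<3. \<Sum>s'<2. 
       (\<Sum>l''<3. \<Sum>s''<2. cf t l'' * sg s'' * (grover3 $$ (l',l'') * (if s' = s'' then 1 else 0))) * KS l l' s s')
       = cf (Ft t) l * sg s"
      unfolding sum3 sum2 t
      by (auto simp: KS_def XX_def ketbra_def grover3_def sg_def field_simps)
  qed
  finally show ?thesis .
qed

lemma walkU_carrier: "walkU N \<in> carrier_mat (6*N) (6*N)"
proof -
  have Bc: "kron grover3 (kron (1\<^sub>m 2) (1\<^sub>m N)) \<in> carrier_mat (6*N) (6*N)"
    using kron_carrier[OF grover3_carrier kron_carrier[OF one_carrier_mat one_carrier_mat], of 2 N]
    by (simp add: mult.assoc)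
  show ?thesis unfolding walkU_def by (rule mult_carrier_mat[OF shiftS_carrier Bc])
qed

lemma powstep: assumes N: "N > 0"
  shows "walkU N ^\<^sub>m n *\<^sub>v vY N (\<lambda>l s. cf t l * sg s) = vY N (\<lambda>l s. cf ((Ft^^n) t) l * sg s)"
proof (induction n arbitrary: t)
  case 0
  have "dim_row (walkU N) = 6*N" using walkU_carrier by auto
  then show ?case by simp
next
  case (Suc n)
  have pc: "walkU N ^\<^sub>m n \<in> carrier_mat (6*N) (6*N)"
    using pow_carrier_mat walkU_carrier by blast
  have "walkU N ^\<^sub>m Suc n *\<^sub>v vY N (\<lambda>l s. cf t l * sg s)
     = walkU N ^\<^sub>m n *\<^sub>v (walkU N *\<^sub>v vY N (\<lambda>l s. cf t l * sg s))"
    by (simp only: pow_mat.simps, rule assoc_mult_mat_vec[OF pc walkU_carrier vY_carrier])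
  also have "\<dots> = vY N (\<lambda>l s. cf ((Ft^^n) (Ft t)) l * sg s)"
    unfolding step[OF N] Suc.IH ..
  finally show ?case by (simp only: funpow_Suc_right o_apply)
qed

fun Mi :: "int \<times> int \<times> int \<Rightarrow> int \<times> int \<times> int" where
  "Mi (a,b,c) = (-a+2*b+2*c, 2*a-b+2*c, -2*a-2*b+c)"

fun sc :: "nat \<Rightarrow> int \<times> int \<times> int \<Rightarrow> complex \<times> complex \<times> complex" where
  "sc n (a,b,c) = (of_int a / 3^n, of_int b / 3^n, of_int c / 3^n)"

lemma Ft_sc: "Ft (sc n t) = sc (Suc n) (Mi t)"
  by (cases t) (simp add: field_simps)

lemma iter_sc: "(Ft^^n) (1,0,0) = sc n ((Mi^^n) (1,0,0))"
proof (induction n)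
  case 0 then show ?case by simp
next
  case (Suc n) then show ?case by (simp add: Ft_sc)
qed

fun Pinv :: "int \<times> int \<times> int \<Rightarrow> bool" where
  "Pinv (a,b,c) = ((a-b) mod 3 = 0 \<and> (a - 2*c) mod 3 = 0 \<and> c mod 3 \<noteq> 0)"

lemma Pinv_Mi: "Pinv t \<Longrightarrow> Pinv (Mi t)"
  by (cases t) (simp, presburger)

lemma Pinv_iter: "n \<ge> 1 \<Longrightarrow> Pinv ((Mi^^n) (1,0,0))"
proof (induction n rule: dec_induct)
  case base then show ?case by simp
next
  case (step n) then show ?case by (simp add: Pinv_Mi)
qed

theorem corollary3p5:
  fixes N :: nat
  assumes "N \<ge> 1"
  shows "\<not> (\<exists>\<tau>::nat. \<tau> \<ge> 1 \<and> walkU N ^\<^sub>m \<tau> = 1\<^sub>m (6 * N))"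
proof
  assume "\<exists>\<tau>::nat. \<tau> \<ge> 1 \<and> walkU N ^\<^sub>m \<tau> = 1\<^sub>m (6 * N)"
  then obtain \<tau> :: nat where t1: "\<tau> \<ge> 1" and U: "walkU N ^\<^sub>m \<tau> = 1\<^sub>m (6 * N)" by blast
  have N: "N > 0" using assms by simp
  obtain a b c where abc: "(Mi^^\<tau>) (1,0,0) = (a,b,c)" by (cases "(Mi^^\<tau>) (1,0,0)") auto
  have P: "c mod 3 \<noteq> 0" using Pinv_iter[OF t1] abc by simp
  have "vY N (\<lambda>l s. cf (1,0,0) l * sg s) = vY N (\<lambda>l s. cf ((Ft^^\<tau>) (1,0,0)) l * sg s)"
    using powstep[OF N, of \<tau> "(1,0,0)"] U by simp
  then have "vY N (\<lambda>l s. cf (1,0,0) l * sg s) $ idx N 2 0 0 = vY N (\<lambda>l s. cf ((Ft^^\<tau>) (1,0,0)) l * sg s) $ idx N 2 0 0"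
    by simp
  then have "0 = of_int c / (3::complex)^\<tau>"
    using N by (simp add: vY_idx iter_sc abc sg_def)
  then have "c = 0" by simp
  with P show False by simp
qed

end
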